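(* Let $\nu\in\mathcal{P}(\Omega)$ be absolutely continuous, and for each $N\in\mathbb{N}^*$ let $(\mathcal{A},X)$ be a tagged partition of $\Omega$ associated with $\nu$, with $X=(x_1,\dots,x_N)$, and $\nu^E_X=\frac1N\sum_{i=1}^N\delta_{x_i}$. (1) For every function $f$ on $\Omega$ with compact support that is bounded and $\nu$-almost everywhere continuous, $\int_\Omega f\,d(\nu-\nu^E_X)=\int_\Omega f\,d\nu-\frac1N\sum_{i=1}^Nf(x_i)=o(1)$ as $N\to+\infty$. Consequently $\nu^E_X$ converges weakly to $\nu$, and $W_1(\nu^E_X,\nu)=o(1)$ as $N\to+\infty$ if moreover $\Omega$ has compact closure. (2) For every $\alpha\in(0,1]$, $N\in\mathbb{N}^*$ and every compactly supported $f\in\mathscr{C}^{0,\alpha}(\Omega)$, $\big|\int_\Omega f\,d\nu-\frac1N\sum_{i=1}^Nf(x_i)\big|\le\frac{C_\Omega^\alpha}{N^\alpha}\operatorname{Hol}_\alpha(f)$. In particular $W_1(\nu^E_X,\nu)\le\frac{C_\Omega}N$.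
   Context: $(\Omega,d_\Omega)$ is a complete metric space carrying a Lebesgue-type reference measure for absolute continuity. A tagged partition of $\Omega$ associated with $\nu$: disjoint subsets $\Omega_1,\dots,\Omega_N$ with union $\Omega$, $\nu(\Omega_i)=1/N$, $\mathrm{diam}(\Omega_i)\le C_\Omega/N$ for a constant $C_\Omega>0$ independent of $N$, and points $x_i\in\Omega_i$. $\operatorname{Hol}_\alpha(f)=\sup_{x\ne x'}|f(x)-f(x')|/d_\Omega(x,x')^\alpha$; $W_1$ is the 1-Wasserstein distance. *)

theory Defs
  imports "HOL-Probability.Probability"
begin

text \<open>Tagged partition (A,X) of the whole space (Omega = UNIV of the metric type)
  associated with nu, with N cells indexed by i < N, diameter bound C/N.\<close>
definition tagged_partition ::
  "'a::metric_space measure \<Rightarrow> real \<Rightarrow> nat \<Rightarrow> (nat \<Rightarrow> 'a set) \<Rightarrow> (nat \<Rightarrow> 'a) \<Rightarrow> bool" where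
  "tagged_partition \<nu> C N A X \<longleftrightarrow>
     (\<forall>i<N. A i \<in> sets \<nu> \<and> measure \<nu> (A i) = 1 / real N \<and> X i \<in> A i
             \<and> (\<forall>x\<in>A i. \<forall>y\<in>A i. dist x y \<le> C / real N))
   \<and> (\<forall>i<N. \<forall>j<N. i \<noteq> j \<longrightarrow> A i \<inter> A j = {})
   \<and> (\<Union>i<N. A i) = UNIV"

definition empirical_measure :: "nat \<Rightarrow> (nat \<Rightarrow> 'a::topological_space) \<Rightarrow> 'a measure" where
  "empirical_measure N X =
     measure_of UNIV (sets borel)
       (\<lambda>S. ennreal ((\<Sum>i<N. indicator S (X i)) / real N))"

text \<open>Hoelder seminorm; the supremum of the empty set is taken to be 0.\<close>
definition Hol :: "real \<Rightarrow> ('a::metric_space \<Rightarrow> real) \<Rightarrow> real" where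
  "Hol \<alpha> f = Sup (insert 0 {\<bar>f x - f y\<bar> / dist x y powr \<alpha> | x y. x \<noteq> y})"

definition holder_continuous :: "real \<Rightarrow> ('a::metric_space \<Rightarrow> real) \<Rightarrow> bool" where
  "holder_continuous \<alpha> f \<longleftrightarrow> bdd_above {\<bar>f x - f y\<bar> / dist x y powr \<alpha> | x y. x \<noteq> y}"

definition compact_support :: "('a::metric_space \<Rightarrow> real) \<Rightarrow> bool" where
  "compact_support f \<longleftrightarrow> compact (closure {x. f x \<noteq> 0})"

definition coupling :: "'a measure \<Rightarrow> 'a measure \<Rightarrow> ('a \<times> 'a) measure \<Rightarrow> bool" where
  "coupling \<mu> \<nu> \<gamma> \<longleftrightarrow> sets \<gamma> = sets (\<mu> \<Otimes>\<^sub>M \<nu>) \<and> prob_space \<gamma>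
     \<and> distr \<gamma> \<mu> fst = \<mu> \<and> distr \<gamma> \<nu> snd = \<nu>"

definition W1 :: "'a::metric_space measure \<Rightarrow> 'a measure \<Rightarrow> ennreal" where
  "W1 \<mu> \<nu> = (INF \<gamma> \<in> {\<gamma>. coupling \<mu> \<nu> \<gamma>}. \<integral>\<^sup>+ p. ennreal (dist (fst p) (snd p)) \<partial>\<gamma>)"

definition weak_conv :: "(nat \<Rightarrow> 'a::topological_space measure) \<Rightarrow> 'a measure \<Rightarrow> bool" where
  "weak_conv \<mu>s \<mu> \<longleftrightarrow> (\<forall>f::'a \<Rightarrow> real. continuous_on UNIV f \<and> bounded (range f) \<longrightarrow>
      (\<lambda>n. integral\<^sup>L (\<mu>s n) f) \<longlonglongrightarrow> integral\<^sup>L \<mu> f)"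

end

theory Submission
  imports Defs
begin


lemma holder_isCont: fixes f :: "'a::metric_space \<Rightarrow> real"
  assumes hb: "\<And>x y. \<bar>f x - f y\<bar> \<le> H * dist x y powr \<alpha>" and a: "0 < \<alpha>"
  shows "isCont f x"
proof -
    have d: "((\<lambda>y. dist y x) \<longlongrightarrow> 0) (at x)"
      by (rule tendsto_dist_iff[THEN iffD1]) (rule tendsto_ident_at)
    have "\<forall>\<^sub>F y in at x. 0 \<le> dist y x" by (intro always_eventually allI) simp
    then have "(\<lambda>y. dist y x powr \<alpha>) \<midarrow>x\<rightarrow> 0"
      using tendsto_zero_powrI[OF d tendsto_const[of \<alpha>] _ a] by blast
    then have "(\<lambda>y. H * dist y x powr \<alpha>) \<midarrow>x\<rightarrow> 0" by (rule tendsto_mult_right_zero)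
    moreover have "\<forall>\<^sub>F y in at x. dist (f y) (f x) \<le> H * dist y x powr \<alpha>"
      by (intro always_eventually allI, unfold dist_real_def, rule hb)
    moreover have "\<forall>\<^sub>F y in at x. 0 \<le> dist (f y) (f x)" by (intro always_eventually allI) simp
    ultimately have "(\<lambda>y. dist (f y) (f x)) \<midarrow>x\<rightarrow> 0"
      using tendsto_sandwich[where f="\<lambda>_. 0" and g="\<lambda>y. dist (f y) (f x)" and h="\<lambda>y. H * dist y x powr \<alpha>" and net="at x" and c=0] tendsto_const[of "0::real" "at x"] by blast
    then show ?thesis unfolding isCont_def by (rule tendsto_dist_iff[THEN iffD2])
qed

locale tp =
  fixes \<nu> :: "'a::metric_space measure" and C :: real
    and A :: "nat \<Rightarrow> nat \<Rightarrow> 'a set" and X :: "nat \<Rightarrow> nat \<Rightarrow> 'a"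
  assumes prob: "prob_space \<nu>" and sets_nu: "sets \<nu> = sets borel"
    and C_pos: "C > 0"
    and part: "\<And>N. N \<ge> 1 \<Longrightarrow> tagged_partition \<nu> C N (A N) (X N)"
begin

definition idx :: "nat \<Rightarrow> 'a \<Rightarrow> nat" where
  "idx N x = (SOME i. i < N \<and> x \<in> A N i)"
definition T :: "nat \<Rightarrow> 'a \<Rightarrow> 'a" where
  "T N x = X N (idx N x)"

lemma space_nu: "space \<nu> = UNIV"
  using sets_eq_imp_space_eq[OF sets_nu] by simp

lemma cell:
  assumes "N \<ge> 1" "i < N"
  shows "A N i \<in> sets \<nu>" "measure \<nu> (A N i) = 1 / real N" "X N i \<in> A N i"
    "\<And>x y. x \<in> A N i \<Longrightarrow> y \<in> A N i \<Longrightarrow> dist x y \<le> C / real N"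
  using part[OF assms(1)] assms(2) unfolding tagged_partition_def by auto

lemma disj: "N \<ge> 1 \<Longrightarrow> i < N \<Longrightarrow> j < N \<Longrightarrow> i \<noteq> j \<Longrightarrow> A N i \<inter> A N j = {}"
  using part unfolding tagged_partition_def by auto

lemma idx: assumes "N \<ge> 1" shows "idx N x < N \<and> x \<in> A N (idx N x)"
proof -
  have "x \<in> (\<Union>i<N. A N i)" using part[OF assms] unfolding tagged_partition_def by auto
  then have "\<exists>i. i < N \<and> x \<in> A N i" by auto
  then show ?thesis unfolding idx_def by (rule someI_ex)
qed

lemma idx_unique: assumes "N \<ge> 1" "i < N" "x \<in> A N i" shows "idx N x = i"
  using idx[OF assms(1), of x] disj[OF assms(1) assms(2), of "idx N x"] assms by blast

lemma dist_T: "N \<ge> 1 \<Longrightarrow> dist (T N x) x \<le> C / real N"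
  using idx[of N x] cell(3,4)[of N "idx N x"] unfolding T_def by blast

lemma T_sum: fixes f :: "'a \<Rightarrow> real" assumes "N \<ge> 1"
  shows "f (T N x) = (\<Sum>i<N. f (X N i) * indicator (A N i) x)"
proof -
  have "(\<Sum>i<N. f (X N i) * indicator (A N i) x) = (\<Sum>i\<in>{idx N x}. f (X N i) * indicator (A N i) x)"
    using idx_unique[OF assms] idx[OF assms, of x]
    by (intro sum.mono_neutral_right) (auto simp: indicator_def)
  also have "\<dots> = f (T N x)" using idx[OF assms, of x] by (simp add: T_def)
  finally show ?thesis by simp
qed

lemma T_meas: assumes "N \<ge> 1" "space M = UNIV" shows "T N \<in> \<nu> \<rightarrow>\<^sub>M M"
proof (rule measurableI)
  fix S assume "S \<in> sets M"
  have "T N -` S \<inter> space \<nu> = (\<Union>i\<in>{i. i < N \<and> X N i \<in> S}. A N i)"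
    apply (auto simp: space_nu T_def)
    using idx[OF assms(1)] idx_unique[OF assms(1)] by blast+
  also have "\<dots> \<in> sets \<nu>" using cell(1)[OF assms(1)] by auto
  finally show "T N -` S \<inter> space \<nu> \<in> sets \<nu>" .
qed (auto simp: assms)

lemma integral_T: fixes f :: "'a \<Rightarrow> real" assumes "N \<ge> 1"
  shows "integral\<^sup>L \<nu> (\<lambda>x. f (T N x)) = (\<Sum>i<N. f (X N i)) / real N"
proof -
  interpret prob_space \<nu> by (rule prob)
  have "integral\<^sup>L \<nu> (\<lambda>x. f (T N x)) = integral\<^sup>L \<nu> (\<lambda>x. \<Sum>i<N. f (X N i) * indicator (A N i) x)"
    using T_sum[OF assms] by simp
  also have "\<dots> = (\<Sum>i<N. integral\<^sup>L \<nu> (\<lambda>x. f (X N i) * indicator (A N i) x))"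
    apply (rule Bochner_Integration.integral_sum[where f="\<lambda>i x. f (X N i) * indicator (A N i) x"], rule integrable_mult_right, rule integrable_real_indicator)
    using cell(1)[OF assms] by (auto simp: emeasure_eq_measure)
  also have "\<dots> = (\<Sum>i<N. f (X N i) * measure \<nu> (A N i))"
    using cell(1)[OF assms] by (intro sum.cong) (auto simp: space_nu)
  also have "\<dots> = (\<Sum>i<N. f (X N i)) / real N"
    using cell(2)[OF assms] by (simp add: sum_divide_distrib)
  finally show ?thesis .
qed

lemma integrable_T: fixes f :: "'a \<Rightarrow> real" assumes "N \<ge> 1"
  shows "integrable \<nu> (\<lambda>x. f (T N x))"
proof -
  interpret prob_space \<nu> by (rule prob)
  have "(\<lambda>x. f (T N x)) = (\<lambda>x. \<Sum>i<N. f (X N i) * indicator (A N i) x)"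
    by (rule ext, rule T_sum[OF assms])
  then show ?thesis
    apply (simp only:)
    apply (rule Bochner_Integration.integrable_sum[where f="\<lambda>i x. f (X N i) * indicator (A N i) x"], rule integrable_mult_right, rule integrable_real_indicator)
    using cell(1)[OF assms] by (auto simp: emeasure_eq_measure)
qed

lemma emp: assumes "N \<ge> 1"
  shows "empirical_measure N (X N) = distr \<nu> borel (T N)"
proof -
  interpret prob_space \<nu> by (rule prob)
  let ?D = "distr \<nu> borel (T N)"
  have Tm: "T N \<in> \<nu> \<rightarrow>\<^sub>M borel" using T_meas[OF assms] by simp
  have "empirical_measure N (X N) = measure_of UNIV (sets borel) (emeasure ?D)"
    unfolding empirical_measure_def
  proof (rule measure_of_eq)
    fix S :: "'a set" assume "S \<in> sigma_sets UNIV (sets borel)"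
    then have S: "S \<in> sets borel" using sets.sigma_sets_eq[of borel] by (metis space_borel)
    have "emeasure ?D S = emeasure \<nu> (T N -` S)"
      using S Tm by (simp add: emeasure_distr space_nu)
    also have "\<dots> = ennreal (measure \<nu> (T N -` S))"
      by (simp add: emeasure_eq_measure)
    also have "measure \<nu> (T N -` S) = integral\<^sup>L \<nu> (\<lambda>x. indicator S (T N x))"
    proof -
      have "(\<lambda>x. indicator S (T N x) :: real) = indicator (T N -` S)" by (auto simp: indicator_def)
      then show ?thesis by (simp add: space_nu)
    qed
    also have "\<dots> = (\<Sum>i<N. indicator S (X N i)) / real N"
      by (rule integral_T[OF assms])
    finally show "ennreal ((\<Sum>i<N. indicator S (X N i) :: real) / real N) = emeasure ?D S" by simp
  qed auto
  also have "\<dots> = ?D" using measure_of_of_measure[of ?D] by simp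
  finally show ?thesis .
qed

lemma W1_bound: assumes "N \<ge> 1"
  shows "W1 (distr \<nu> borel (T N)) \<nu> \<le> ennreal (C / real N)"
proof -
  interpret prob_space \<nu> by (rule prob)
  define D where "D = distr \<nu> borel (T N)"
  have sD: "sets D = sets borel" "space D = UNIV" by (auto simp: D_def)
  define P where "P = (\<lambda>x. (T N x, x))"
  have Pm: "P \<in> \<nu> \<rightarrow>\<^sub>M D \<Otimes>\<^sub>M \<nu>"
    unfolding P_def
    by (rule measurable_Pair) (auto intro: T_meas[OF assms sD(2)] measurable_ident_sets)
  define \<gamma> where "\<gamma> = distr \<nu> (D \<Otimes>\<^sub>M \<nu>) P"
  have fstm: "fst \<in> D \<Otimes>\<^sub>M \<nu> \<rightarrow>\<^sub>M D" and sndm: "snd \<in> D \<Otimes>\<^sub>M \<nu> \<rightarrow>\<^sub>M \<nu>" by auto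
  have cp: "coupling D \<nu> \<gamma>"
    unfolding coupling_def
  proof (intro conjI)
    show "sets \<gamma> = sets (D \<Otimes>\<^sub>M \<nu>)" by (simp add: \<gamma>_def)
    show "prob_space \<gamma>" unfolding \<gamma>_def by (rule prob_space_distr[OF Pm])
    have "distr \<gamma> D fst = distr \<nu> D (fst \<circ> P)" unfolding \<gamma>_def by (rule distr_distr[OF fstm Pm])
    also have "\<dots> = D" unfolding D_def by (rule distr_cong) (auto simp: P_def D_def)
    finally show "distr \<gamma> D fst = D" .
    have "distr \<gamma> \<nu> snd = distr \<nu> \<nu> (snd \<circ> P)" unfolding \<gamma>_def by (rule distr_distr[OF sndm Pm])
    also have "\<dots> = distr \<nu> \<nu> (\<lambda>x. x)" by (rule distr_cong) (auto simp: P_def)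
    finally show "distr \<gamma> \<nu> snd = \<nu>" by simp
  qed
  define G where "G = (\<Union>i<N. A N i \<times> A N i)"
  have Gs: "G \<in> sets (D \<Otimes>\<^sub>M \<nu>)"
    unfolding G_def using cell(1)[OF assms] sD sets_nu
    by (intro sets.finite_UN) (auto intro!: pair_measureI)
  define g where "g = (\<lambda>p. if p \<in> G then ennreal (C / real N) else \<top>)"
  have gm: "g \<in> borel_measurable (D \<Otimes>\<^sub>M \<nu>)"
    unfolding g_def using Gs by (intro measurable_If_set) auto
  have le: "ennreal (dist (fst p) (snd p)) \<le> g p" for p
  proof (cases "p \<in> G")
    case True
    then obtain i where "i < N" "fst p \<in> A N i" "snd p \<in> A N i" unfolding G_def by auto
    then have "dist (fst p) (snd p) \<le> C / real N" using cell(4)[OF assms] by blast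
    then show ?thesis using True by (auto simp: g_def intro: ennreal_leI)
  qed (auto simp: g_def)
  have PG: "P x \<in> G" for x using idx[OF assms, of x] cell(3)[OF assms, of "idx N x"]
    unfolding P_def G_def T_def by auto
  have "W1 D \<nu> \<le> (\<integral>\<^sup>+ p. ennreal (dist (fst p) (snd p)) \<partial>\<gamma>)"
    unfolding W1_def using cp by (intro INF_lower) auto
  also have "\<dots> \<le> (\<integral>\<^sup>+ p. g p \<partial>\<gamma>)" by (intro nn_integral_mono le)
  also have "\<dots> = (\<integral>\<^sup>+ x. g (P x) \<partial>\<nu>)" unfolding \<gamma>_def by (rule nn_integral_distr[OF Pm]) (use gm in simp)
  also have "\<dots> = (\<integral>\<^sup>+ x. ennreal (C / real N) \<partial>\<nu>)" using PG by (simp add: g_def)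
  also have "\<dots> = ennreal (C / real N)" by (simp add: emeasure_space_1)
  finally show ?thesis by (simp add: D_def)
qed

lemma T_lim: "(\<lambda>N. T N x) \<longlonglongrightarrow> x"
proof -
  have "(\<lambda>N. dist (T N x) x) \<longlonglongrightarrow> 0"
  proof (rule tendsto_sandwich[where f="\<lambda>_. 0" and h="\<lambda>N. C / real N"])
    show "\<forall>\<^sub>F N in sequentially. 0 \<le> dist (T N x) x" by simp
    show "\<forall>\<^sub>F N in sequentially. dist (T N x) x \<le> C / real N"
      by (rule eventually_mono[OF eventually_ge_at_top[of 1]]) (rule dist_T)
  qed (rule tendsto_const, rule lim_const_over_n)
  then show ?thesis using tendsto_dist_iff by blast
qed

lemma fT_meas: fixes f :: "'a \<Rightarrow> real" assumes "N \<ge> 1"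
  shows "(\<lambda>x. f (T N x)) \<in> borel_measurable \<nu>"
  by (rule measurable_compose[OF T_meas[OF assms, of "count_space UNIV"]]) auto

lemma meas_lim: fixes f :: "'a \<Rightarrow> real"
  assumes "Z \<in> sets \<nu>" "\<And>x. x \<notin> Z \<Longrightarrow> isCont f x"
  shows "(\<lambda>x. if x \<in> Z then 0 else f x) \<in> borel_measurable \<nu>"
proof (rule borel_measurable_LIMSEQ_metric[where f="\<lambda>N x. if x \<in> Z then 0 else f (T (Suc N) x)"])
  fix N show "(\<lambda>x. if x \<in> Z then 0 else f (T (Suc N) x)) \<in> borel_measurable \<nu>"
    by (rule measurable_If_set[OF measurable_const fT_meas]) (use assms(1) in \<open>auto simp: space_nu\<close>)
next
  fix x
  show "(\<lambda>N. if x \<in> Z then 0 else f (T (Suc N) x)) \<longlonglongrightarrow> (if x \<in> Z then 0 else f x)"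
  proof (cases "x \<in> Z")
    case False
    have "(\<lambda>N. T (Suc N) x) \<longlonglongrightarrow> x" by (rule LIMSEQ_Suc[OF T_lim])
    then have "(\<lambda>N. f (T (Suc N) x)) \<longlonglongrightarrow> f x" by (rule isCont_tendsto_compose[OF assms(2)[OF False]])
    then show ?thesis using False by simp
  qed simp
qed

lemma cont_meas: fixes f :: "'a \<Rightarrow> real"
  assumes "\<And>x. isCont f x" shows "f \<in> borel_measurable \<nu>"
  using meas_lim[of "{}" f] assms by simp

lemma compl_meas: fixes f :: "'a \<Rightarrow> real"
  assumes Z: "Z \<in> null_sets \<nu>" and c: "\<And>x. x \<notin> Z \<Longrightarrow> isCont f x"
  shows "f \<in> borel_measurable (completion \<nu>)"
proof -
  let ?f' = "\<lambda>x. if x \<in> Z then 0 else f x"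
  have m: "?f' \<in> borel_measurable \<nu>" using meas_lim[OF _ c] Z by auto
  show ?thesis
  proof (rule measurableI)
    fix S :: "real set" assume "S \<in> sets borel"
    then have "?f' -` S \<inter> space \<nu> \<in> sets \<nu>" using m by (rule measurable_sets[rotated])
    then have "?f' -` S \<inter> space \<nu> - Z \<in> sets \<nu>" using Z by (intro sets.Diff) auto
    then have 1: "?f' -` S - Z \<in> sets (completion \<nu>)" unfolding space_nu by (simp add: sets_completionI_sets)
    have "Z \<in> null_sets (completion \<nu>)" using Z by (rule null_sets_completionI)
    then have "f -` S \<inter> Z \<in> null_sets (completion \<nu>)" by (rule null_sets_completion_subset[rotated]) auto
    then have 2: "f -` S \<inter> Z \<in> sets (completion \<nu>)" by auto
    have "f -` S \<inter> space (completion \<nu>) = (?f' -` S - Z) \<union> (f -` S \<inter> Z)"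
      by (auto simp: space_nu)
    then show "f -` S \<inter> space (completion \<nu>) \<in> sets (completion \<nu>)" using 1 2 by auto
  qed auto
qed

lemma conv: fixes f :: "'a \<Rightarrow> real"
  assumes bnd: "bounded (range f)" and ae: "AE x in \<nu>. isCont f x"
  shows "(\<lambda>N. integral\<^sup>L (completion \<nu>) f - (\<Sum>i<N. f (X N i)) / real N) \<longlonglongrightarrow> 0"
proof -
  interpret prob_space \<nu> by (rule prob)
  interpret c: prob_space "completion \<nu>" by (rule prob_space_completion)
  obtain B where B: "\<And>x. \<bar>f x\<bar> \<le> B" using bnd unfolding bounded_iff by auto
  obtain Z where Z: "Z \<in> null_sets \<nu>" "{x \<in> space \<nu>. \<not> isCont f x} \<subseteq> Z"
    using ae by (auto elim!: AE_E)
  have cZ: "isCont f x" if "x \<notin> Z" for x using Z(2) that by (auto simp: space_nu)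
  have fm: "f \<in> borel_measurable (completion \<nu>)" by (rule compl_meas[OF Z(1) cZ])
  have lim: "(\<lambda>N. integral\<^sup>L (completion \<nu>) (\<lambda>x. f (T (Suc N) x))) \<longlonglongrightarrow> integral\<^sup>L (completion \<nu>) f"
  proof (rule integral_dominated_convergence[where w="\<lambda>_. B"])
    show "f \<in> borel_measurable (completion \<nu>)" by (rule fm)
    show "(\<lambda>x. f (T (Suc N) x)) \<in> borel_measurable (completion \<nu>)" for N
      by (rule measurable_completion[OF fT_meas]) simp
    show "integrable (completion \<nu>) (\<lambda>_. B)" by simp
    show "AE x in completion \<nu>. (\<lambda>N. f (T (Suc N) x)) \<longlonglongrightarrow> f x"
    proof (rule AE_completion)
      show "AE x in \<nu>. (\<lambda>N. f (T (Suc N) x)) \<longlonglongrightarrow> f x"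
        using ae
      proof (rule AE_mp, intro AE_I2 impI)
        fix x assume "isCont f x"
        then show "(\<lambda>N. f (T (Suc N) x)) \<longlonglongrightarrow> f x"
          by (rule isCont_tendsto_compose) (rule LIMSEQ_Suc[OF T_lim])
      qed
    qed
    show "AE x in completion \<nu>. norm (f (T (Suc N) x)) \<le> B" for N
      using B by simp
  qed
  have eq: "integral\<^sup>L (completion \<nu>) (\<lambda>x. f (T (Suc N) x)) = (\<Sum>i<Suc N. f (X (Suc N) i)) / real (Suc N)" for N
    using integral_completion[OF fT_meas[of "Suc N" f]] integral_T[of "Suc N" f] by simp
  have "(\<lambda>N. integral\<^sup>L (completion \<nu>) f - (\<Sum>i<Suc N. f (X (Suc N) i)) / real (Suc N)) \<longlonglongrightarrow> 0"
    using tendsto_diff[OF tendsto_const[of "integral\<^sup>L (completion \<nu>) f"] lim] unfolding eq by simp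
  then show ?thesis by (rule LIMSEQ_imp_Suc)
qed

lemma hol: fixes f :: "'a \<Rightarrow> real"
  assumes a: "0 < \<alpha>" "\<alpha> \<le> 1" and N: "N \<ge> 1" and h: "holder_continuous \<alpha> f"
  shows "\<bar>integral\<^sup>L \<nu> f - (\<Sum>i<N. f (X N i)) / real N\<bar> \<le> C powr \<alpha> / real N powr \<alpha> * Hol \<alpha> f"
proof -
  interpret prob_space \<nu> by (rule prob)
  define H where "H = Hol \<alpha> f"
  let ?S = "{\<bar>f x - f y\<bar> / dist x y powr \<alpha> | x y. x \<noteq> y}"
  have bdd: "bdd_above (insert 0 ?S)" using h unfolding holder_continuous_def by simp
  have H0: "0 \<le> H" unfolding H_def Hol_def by (rule cSup_upper[OF _ bdd]) simp
  have hb: "\<bar>f x - f y\<bar> \<le> H * dist x y powr \<alpha>" for x y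
  proof (cases "x = y")
    case False
    then have "\<bar>f x - f y\<bar> / dist x y powr \<alpha> \<le> H" unfolding H_def Hol_def
      by (intro cSup_upper[OF _ bdd]) blast
    moreover have "dist x y powr \<alpha> > 0" using False by simp
    ultimately show ?thesis by (simp add: divide_le_eq)
  qed simp
  have cont: "isCont f x" for x by (rule holder_isCont[OF hb a(1)])
  have fm: "f \<in> borel_measurable \<nu>" by (rule cont_meas[OF cont])
  have dT: "\<bar>f x - f (T N x)\<bar> \<le> H * (C / real N) powr \<alpha>" for x
  proof -
    have "\<bar>f x - f (T N x)\<bar> \<le> H * dist x (T N x) powr \<alpha>" by (rule hb)
    also have "\<dots> \<le> H * (C / real N) powr \<alpha>"
      using dist_T[OF N, of x] a H0 by (intro mult_left_mono powr_mono2) (auto simp: dist_commute)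
    finally show ?thesis .
  qed
  have im: "integrable \<nu> (\<lambda>x. f x - f (T N x))"
    using dT by (intro integrable_const_bound[where B="H * (C / real N) powr \<alpha>"]) (auto intro!: borel_measurable_diff fm fT_meas N)
  have iT: "integrable \<nu> (\<lambda>x. f (T N x))" by (rule integrable_T[OF N])
  have fi: "integrable \<nu> f"
  proof -
    have "integrable \<nu> (\<lambda>x. (f x - f (T N x)) + f (T N x))"
      using im iT by (rule Bochner_Integration.integrable_add)
    then show ?thesis by simp
  qed
  have "integral\<^sup>L \<nu> (\<lambda>x. f x - f (T N x)) = integral\<^sup>L \<nu> f - integral\<^sup>L \<nu> (\<lambda>x. f (T N x))"
    by (rule Bochner_Integration.integral_diff[OF fi iT])
  then have "integral\<^sup>L \<nu> f - (\<Sum>i<N. f (X N i)) / real N = integral\<^sup>L \<nu> (\<lambda>x. f x - f (T N x))"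
    unfolding integral_T[OF N] by simp
  also have "\<bar>\<dots>\<bar> \<le> integral\<^sup>L \<nu> (\<lambda>x. norm (f x - f (T N x)))"
    using integral_norm_bound[of \<nu> "\<lambda>x. f x - f (T N x)"] by simp
  also have "\<dots> \<le> integral\<^sup>L \<nu> (\<lambda>x. H * (C / real N) powr \<alpha>)"
  proof (rule integral_mono)
    show "integrable \<nu> (\<lambda>x. norm (f x - f (T N x)))" by (rule integrable_norm[OF im])
    show "integrable \<nu> (\<lambda>x. H * (C / real N) powr \<alpha>)" by (rule integrable_const)
    fix x show "norm (f x - f (T N x)) \<le> H * (C / real N) powr \<alpha>" unfolding real_norm_def by (rule dT)
  qed
  also have "\<dots> = H * (C / real N) powr \<alpha>" by (simp add: prob_space)
  also have "\<dots> = C powr \<alpha> / real N powr \<alpha> * Hol \<alpha> f" by (simp add: H_def powr_divide)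
  finally show ?thesis .
qed

end

theorem lemma16:
  fixes \<nu> lam :: "'a::{metric_space, complete_space} measure"
    and C :: real
    and A :: "nat \<Rightarrow> nat \<Rightarrow> 'a set"
    and X :: "nat \<Rightarrow> nat \<Rightarrow> 'a"
  assumes prob: "prob_space \<nu>" and sets_nu: "sets \<nu> = sets borel"
    and sets_ref: "sets lam = sets borel"
    and ac: "absolutely_continuous lam \<nu>"
    and C_pos: "C > 0"
    and part: "\<And>N. N \<ge> 1 \<Longrightarrow> tagged_partition \<nu> C N (A N) (X N)"
  shows
    "(\<forall>f::'a \<Rightarrow> real. compact_support f \<and> bounded (range f) \<and> (AE x in \<nu>. isCont f x) \<longrightarrow>
        (\<lambda>N. integral\<^sup>L (completion \<nu>) f - (\<Sum>i<N. f (X N i)) / real N) \<longlonglongrightarrow> 0)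
     \<and> weak_conv (\<lambda>N. empirical_measure N (X N)) \<nu>
     \<and> (compact (UNIV :: 'a set) \<longrightarrow> (\<lambda>N. W1 (empirical_measure N (X N)) \<nu>) \<longlonglongrightarrow> 0)
     \<and> (\<forall>\<alpha>::real. \<forall>N::nat. \<forall>f::'a \<Rightarrow> real.
          0 < \<alpha> \<and> \<alpha> \<le> 1 \<and> N \<ge> 1 \<and> compact_support f \<and> holder_continuous \<alpha> f \<longrightarrow>
          \<bar>integral\<^sup>L \<nu> f - (\<Sum>i<N. f (X N i)) / real N\<bar>
            \<le> C powr \<alpha> / real N powr \<alpha> * Hol \<alpha> f)
     \<and> (\<forall>N::nat. N \<ge> 1 \<longrightarrow> W1 (empirical_measure N (X N)) \<nu> \<le> ennreal (C / real N))"
proof -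
  interpret tp \<nu> C A X by (rule tp.intro[OF prob sets_nu C_pos part])
  have c1: "\<forall>f::'a \<Rightarrow> real. compact_support f \<and> bounded (range f) \<and> (AE x in \<nu>. isCont f x) \<longrightarrow>
        (\<lambda>N. integral\<^sup>L (completion \<nu>) f - (\<Sum>i<N. f (X N i)) / real N) \<longlonglongrightarrow> 0"
    using conv by blast
  have c5: "\<forall>N::nat. N \<ge> 1 \<longrightarrow> W1 (empirical_measure N (X N)) \<nu> \<le> ennreal (C / real N)"
    using emp W1_bound by simp
  have c3: "(\<lambda>N. W1 (empirical_measure N (X N)) \<nu>) \<longlonglongrightarrow> 0"
  proof (rule tendsto_sandwich[where f="\<lambda>_. 0" and h="\<lambda>N. ennreal (C / real N)"])
    show "\<forall>\<^sub>F N in sequentially. 0 \<le> W1 (empirical_measure N (X N)) \<nu>" by simp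
    show "\<forall>\<^sub>F N in sequentially. W1 (empirical_measure N (X N)) \<nu> \<le> ennreal (C / real N)"
      using c5 by (intro eventually_mono[OF eventually_ge_at_top[of 1]]) blast
    show "(\<lambda>N. ennreal (C / real N)) \<longlonglongrightarrow> 0"
      using tendsto_ennrealI[OF lim_const_over_n[of C]] by simp
  qed simp
  have c4: "\<forall>\<alpha>::real. \<forall>N::nat. \<forall>f::'a \<Rightarrow> real.
          0 < \<alpha> \<and> \<alpha> \<le> 1 \<and> N \<ge> 1 \<and> compact_support f \<and> holder_continuous \<alpha> f \<longrightarrow>
          \<bar>integral\<^sup>L \<nu> f - (\<Sum>i<N. f (X N i)) / real N\<bar>
            \<le> C powr \<alpha> / real N powr \<alpha> * Hol \<alpha> f"
    using hol by blast
  have c2: "weak_conv (\<lambda>N. empirical_measure N (X N)) \<nu>"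
    unfolding weak_conv_def
  proof (intro allI impI, elim conjE)
    fix f :: "'a \<Rightarrow> real"
    assume cf: "continuous_on UNIV f" and bf: "bounded (range f)"
    have ic: "isCont f x" for x using cf continuous_on_eq_continuous_at[OF open_UNIV] by blast
    have fm: "f \<in> borel_measurable \<nu>" by (rule cont_meas[OF ic])
    have fb: "f \<in> borel_measurable borel" using borel_measurable_continuous_onI[OF cf] .
    have "(\<lambda>N. integral\<^sup>L (completion \<nu>) f - (\<Sum>i<N. f (X N i)) / real N) \<longlonglongrightarrow> 0"
      by (rule conv[OF bf]) (simp add: ic)
    then have "(\<lambda>N. integral\<^sup>L \<nu> f - (\<Sum>i<N. f (X N i)) / real N) \<longlonglongrightarrow> 0"
      using integral_completion[OF fm] by simp
    then have "(\<lambda>N. integral\<^sup>L \<nu> f - (integral\<^sup>L \<nu> f - (\<Sum>i<N. f (X N i)) / real N)) \<longlonglongrightarrow> integral\<^sup>L \<nu> f - 0"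
      by (intro tendsto_diff tendsto_const)
    then have lim: "(\<lambda>N. (\<Sum>i<N. f (X N i)) / real N) \<longlonglongrightarrow> integral\<^sup>L \<nu> f" by simp
    have "\<forall>\<^sub>F N in sequentially. (\<Sum>i<N. f (X N i)) / real N = integral\<^sup>L (empirical_measure N (X N)) f"
    proof (rule eventually_mono[OF eventually_ge_at_top[of 1]])
      fix N :: nat assume N: "1 \<le> N"
      have "integral\<^sup>L (empirical_measure N (X N)) f = integral\<^sup>L (distr \<nu> borel (T N)) f"
        by (simp add: emp[OF N])
      also have "\<dots> = integral\<^sup>L \<nu> (\<lambda>x. f (T N x))"
        by (rule integral_distr[OF T_meas[OF N] fb]) simp
      also have "\<dots> = (\<Sum>i<N. f (X N i)) / real N" by (rule integral_T[OF N])
      finally show "(\<Sum>i<N. f (X N i)) / real N = integral\<^sup>L (empirical_measure N (X N)) f" by simp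
    qed
    then show "(\<lambda>N. integral\<^sup>L (empirical_measure N (X N)) f) \<longlonglongrightarrow> integral\<^sup>L \<nu> f"
      by (rule Lim_transform_eventually[OF lim])
  qed
  show ?thesis using c1 c2 c3 c4 c5 by blast
qed

end
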